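(* Let $p\in(0,\infty)$, let $u\in\mathbb{S}^{n-1}$, let $H=\{x\in\mathbb{R}^n:\langle x,u\rangle=0\}$, and let $K\subset\mathbb{R}^n$ be a compact set with non-empty interior. Let $f:\mathbb{R}\to\mathbb{R}_{\geq0}$, $f(t)=\mathrm{vol}_{n-1}\bigl(K\cap(tu+H)\bigr)$, be $p$-concave, with support $[a,b]$, and assume $a=-b$ (i.e. the midpoint $\frac{a+b}{2}u$ of $K$ in direction $u$ is the origin). Let $K^-=K\cap\{x:\langle x,u\rangle\leq0\}$. Then \[\frac{\mathrm{vol}(K^-)}{\mathrm{vol}(K)}\geq\left(\frac12\right)^{(p+1)/p}.\]
   Context: $\mathrm{vol}_k$ denotes $k$-dimensional Lebesgue measure, $\mathrm{vol}=\mathrm{vol}_n$. A function $\varphi\geq0$ is $p$-concave ($p>0$) if $\varphi((1-\lambda)x+\lambda y)\geq((1-\lambda)\varphi(x)^p+\lambda\varphi(y)^p)^{1/p}$ whenever $\varphi(x)\varphi(y)>0$, $\lambda\in(0,1)$; equivalently $\varphi^p$ is concave on its support. The support of $f$ is an interval $[a,b]$ with $f>0$ on $(a,b)$. *)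

theory Defs
  imports "HOL-Analysis.Analysis"
begin

text \<open>Euclidean space R^n is modelled as real \<times> 'b, where 'b is an arbitrary
Euclidean space of dimension n-1. The (n-1)-dimensional volume of a subset of the
affine hyperplane t u + u-perp is computed by pulling it back along an
(arbitrarily chosen) orthogonal transformation Q with Q (1,0) = u, which maps
{0} \<times> 'b isometrically onto u-perp; Lebesgue measure on 'b is rotation invariant,
so the value does not depend on the choice of Q.\<close>

definition hyp_param :: "real \<times> 'b::euclidean_space \<Rightarrow> 'b \<Rightarrow> real \<times> 'b" where
  "hyp_param u = (let Q = (SOME Q :: real \<times> 'b \<Rightarrow> real \<times> 'b. orthogonal_transformation Q \<and> Q (1, 0) = u)
                  in (\<lambda>y. Q (0, y)))"

definition section_vol :: "(real \<times> 'b::euclidean_space) set \<Rightarrow> real \<times> 'b \<Rightarrow> real \<Rightarrow> real" where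
  "section_vol K u t = measure lebesgue {y. t *\<^sub>R u + hyp_param u y \<in> K}"

definition p_concave :: "real \<Rightarrow> (real \<Rightarrow> real) \<Rightarrow> bool" where
  "p_concave p \<phi> \<longleftrightarrow> (\<forall>x y l. \<phi> x * \<phi> y > 0 \<longrightarrow> 0 < l \<longrightarrow> l < 1 \<longrightarrow>
      \<phi> ((1 - l) * x + l * y) \<ge> ((1 - l) * \<phi> x powr p + l * \<phi> y powr p) powr (1 / p))"

end

theory Submission
  imports Defs
begin


typedef (overloaded) ('a::euclidean_space) bidx = "Basis :: 'a set"
  morphisms rep_b abs_b
  using nonempty_Basis by blast

instance bidx :: (euclidean_space) finite
proof
  have "UNIV = abs_b ` (Basis :: 'a set)"
    using type_definition.univ[OF type_definition_bidx] by simp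
  then show "finite (UNIV :: 'a bidx set)" by (metis finite_Basis finite_imageI)
qed

definition enc_b :: "('a::euclidean_space) bidx \<Rightarrow> nat" where
  "enc_b = (SOME g. inj g)"

lemma inj_enc_b: "inj enc_b"
proof -
  have "\<exists>g :: 'a bidx \<Rightarrow> nat. inj g"
    using finite_imp_inj_to_nat_seg[of "UNIV :: 'a bidx set"] by auto
  then show ?thesis unfolding enc_b_def by (rule someI_ex)
qed

instantiation bidx :: (euclidean_space) wellorder
begin
definition less_eq_bidx :: "'a bidx \<Rightarrow> 'a bidx \<Rightarrow> bool" where "less_eq_bidx x y \<longleftrightarrow> enc_b x \<le> enc_b y"
definition less_bidx :: "'a bidx \<Rightarrow> 'a bidx \<Rightarrow> bool" where "less_bidx x y \<longleftrightarrow> enc_b x < enc_b y"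
instance
proof
  fix x y z :: "'a bidx"
  show "(x < y) = (x \<le> y \<and> \<not> y \<le> x)" by (auto simp: less_eq_bidx_def less_bidx_def)
  show "x \<le> x" by (simp add: less_eq_bidx_def)
  show "x \<le> y \<Longrightarrow> y \<le> z \<Longrightarrow> x \<le> z" by (simp add: less_eq_bidx_def)
  show "x \<le> y \<Longrightarrow> y \<le> x \<Longrightarrow> x = y" using inj_enc_b
    by (metis injD antisym less_eq_bidx_def)
  show "x \<le> y \<or> y \<le> x" by (auto simp: less_eq_bidx_def)
next
  fix P :: "'a bidx \<Rightarrow> bool" and a
  assume H: "\<And>x. (\<And>y. y < x \<Longrightarrow> P y) \<Longrightarrow> P x"
  have "\<forall>x. enc_b x = n \<longrightarrow> P x" for n
  proof (induction n rule: less_induct)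
    case (less n)
    then show ?case using H by (auto simp: less_bidx_def)
  qed
  then show "P a" by blast
qed
end


lemma rep_b_Basis: "rep_b i \<in> Basis"
  using rep_b by blast

lemma inj_rep_b: "inj rep_b"
  by (meson injI rep_b_inject)

lemma range_rep_b: "range rep_b = Basis"
  using type_definition.Rep_range[OF type_definition_bidx] .

lemma rep_b_inner: "rep_b i \<bullet> rep_b j = (if i = j then 1 else 0)"
  using inner_Basis[OF rep_b_Basis rep_b_Basis, of i j] by (simp add: rep_b_inject)

definition Lm :: "real^('a::euclidean_space bidx) \<Rightarrow> 'a" where
  "Lm x = (\<Sum>i\<in>UNIV. (x $ i) *\<^sub>R rep_b i)"

definition Li :: "'a::euclidean_space \<Rightarrow> real^('a bidx)" where
  "Li y = (\<chi> i. y \<bullet> rep_b i)"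

lemma Lm_inner_rep: "Lm x \<bullet> rep_b j = x $ j"
  by (simp add: Lm_def inner_sum_left rep_b_inner if_distrib cong: if_cong)

lemma Li_Lm [simp]: "Li (Lm x) = x"
  by (simp add: Li_def Lm_inner_rep vec_eq_iff)

lemma Lm_Li [simp]: "Lm (Li y) = y"
proof -
  have "Lm (Li y) = (\<Sum>i\<in>UNIV. (y \<bullet> rep_b i) *\<^sub>R rep_b i)"
    by (simp add: Lm_def Li_def)
  also have "\<dots> = (\<Sum>b\<in>Basis. (y \<bullet> b) *\<^sub>R b)"
    using sum.reindex[OF inj_rep_b, of "\<lambda>b. (y \<bullet> b) *\<^sub>R b"]
    by (simp add: range_rep_b o_def)
  also have "\<dots> = y" by (rule euclidean_representation)
  finally show ?thesis .
qed

lemma linear_Lm: "linear Lm"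
  by (rule linearI) (simp_all add: Lm_def scaleR_add_left sum.distrib scaleR_sum_right)

lemma linear_Li: "linear Li"
  by (rule linearI) (simp_all add: Li_def vec_eq_iff inner_add_left)

lemma Lm_inner: "Lm x \<bullet> Lm y = x \<bullet> y"
proof -
  have "rep_b i \<bullet> Lm y = y $ i" for i by (metis inner_commute Lm_inner_rep)
  then show ?thesis by (simp add: Lm_def[of x] inner_sum_left inner_vec_def)
qed

lemma Li_inner: "Li x \<bullet> Li y = x \<bullet> y"
  by (metis Lm_Li Lm_inner)

lemma cont_Lm: "continuous_on A Lm"
  by (rule linear_continuous_on[OF linear_conv_bounded_linear[THEN iffD1, OF linear_Lm]])

lemma cont_Li: "continuous_on A Li"
  by (rule linear_continuous_on[OF linear_conv_bounded_linear[THEN iffD1, OF linear_Li]])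

lemma Lm_meas[measurable]: "Lm \<in> borel_measurable borel"
  by (intro borel_measurable_continuous_onI cont_Lm)

lemma Li_meas[measurable]: "Li \<in> borel_measurable borel"
  by (intro borel_measurable_continuous_onI cont_Li)

lemma distr_Lm: "distr lborel borel Lm = (lborel :: 'a::euclidean_space measure)"
proof (rule lborel_eqI[symmetric])
  fix l u :: 'a
  assume lu: "\<And>b. b \<in> Basis \<Longrightarrow> l \<bullet> b \<le> u \<bullet> b"
  have pre: "Lm -` box l u = box (Li l) (Li u)"
  proof -
    have B: "(\<forall>b\<in>Basis. P b) \<longleftrightarrow> (\<forall>i. P (rep_b i))" for P
      using range_rep_b by (metis rangeE rangeI)
    show ?thesis
      by (auto simp: set_eq_iff mem_box_cart mem_box B Li_def Lm_inner_rep)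
  qed
  have ne: "cbox (Li l) (Li u) \<noteq> {}"
    using lu rep_b_Basis by (auto simp: interval_ne_empty_cart(1) Li_def)
  have "emeasure (distr lborel borel Lm) (box l u) = emeasure lborel (box (Li l) (Li u))"
    by (simp add: emeasure_distr pre)
  also have "\<dots> = emeasure lborel (cbox (Li l) (Li u))"
    by (simp add: emeasure_lborel_box_eq emeasure_lborel_cbox_eq)
  also have "\<dots> = ennreal (measure lborel (cbox (Li l) (Li u)))"
    using emeasure_lborel_cbox_finite[of "Li l" "Li u"] by (intro emeasure_eq_ennreal_measure) (simp add: less_top)
  also have "\<dots> = ennreal (\<Prod>i\<in>UNIV. u \<bullet> rep_b i - l \<bullet> rep_b i)"
    using ne by (simp add: content_cbox_cart Li_def)
  also have "(\<Prod>i\<in>UNIV. u \<bullet> rep_b i - l \<bullet> rep_b i) = (\<Prod>b\<in>Basis. (u - l) \<bullet> b)"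
    using prod.reindex[OF inj_rep_b, of "\<lambda>b. (u - l) \<bullet> b"]
    by (simp add: range_rep_b o_def inner_diff_left)
  finally show "emeasure (distr lborel borel Lm) (box l u) = (\<Prod>b\<in>Basis. (u - l) \<bullet> b)" .
qed simp


lemma Lm_image_eq: "Lm ` T = Li -` T"
  by (auto simp: image_iff) (metis Lm_Li)

lemma Li_image_eq: "Li ` S = Lm -` S"
  by (auto simp: image_iff) (metis Li_Lm)

lemma emeasure_Lm_image:
  assumes "T \<in> sets borel"
  shows "emeasure lborel (Lm ` T) = emeasure lborel T"
proof -
  have mT: "Lm ` T \<in> sets borel"
    unfolding Lm_image_eq using measurable_sets[OF Li_meas assms] by simp
  have "emeasure lborel (Lm ` T) = emeasure (distr lborel borel Lm) (Lm ` T)"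
    by (simp add: distr_Lm)
  also have "\<dots> = emeasure lborel (Lm -` (Lm ` T))"
    using mT by (simp add: emeasure_distr)
  also have "Lm -` (Lm ` T) = T"
    by (auto simp: image_iff) (metis Li_Lm)
  finally show ?thesis .
qed

lemma emeasure_Li_image:
  assumes "S \<in> sets borel"
  shows "emeasure lborel (Li ` S) = emeasure lborel S"
proof -
  have mT: "Li ` S \<in> sets borel"
    unfolding Li_image_eq using measurable_sets[OF Lm_meas assms] by simp
  have "S = Lm ` (Li ` S)" by (auto simp: image_iff)
  then show ?thesis using emeasure_Lm_image[OF mT] by simp
qed

lemma measure_leb_compact: "compact S \<Longrightarrow> measure lebesgue S = measure lborel S"
  by (rule measure_completion) (simp add: borel_compact)

lemma measure_orth_compact:
  fixes Q :: "'a::euclidean_space \<Rightarrow> 'a"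
  assumes Q: "orthogonal_transformation Q" and S: "compact S"
  shows "measure lebesgue (Q ` S) = measure lebesgue S"
proof -
  define Q' where "Q' = Li \<circ> Q \<circ> Lm"
  have oQ': "orthogonal_transformation Q'"
    unfolding Q'_def orthogonal_transformation_def using Q
    by (auto simp: orthogonal_transformation_def Li_inner Lm_inner
          intro!: linear_compose linear_Li linear_Lm)
  have contQ: "continuous_on A Q" for A
    using Q by (intro linear_continuous_on linear_conv_bounded_linear[THEN iffD1]
        orthogonal_transformation_linear)
  have contQ': "continuous_on A Q'" for A
    using oQ' by (intro linear_continuous_on linear_conv_bounded_linear[THEN iffD1]
        orthogonal_transformation_linear)
  have cLi: "compact (Li ` S)" using S cont_Li compact_continuous_image by blast
  have cQ'': "compact (Q' ` Li ` S)" using cLi contQ' compact_continuous_image by blast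
  have cQ: "compact (Q ` S)" using S contQ compact_continuous_image by blast
  have eq: "Q ` S = Lm ` (Q' ` (Li ` S))"
    by (auto simp: Q'_def image_iff)
  have "measure lebesgue (Q ` S) = measure lborel (Q ` S)"
    using cQ by (rule measure_leb_compact)
  also have "\<dots> = measure lborel (Q' ` (Li ` S))"
    unfolding eq measure_def using emeasure_Lm_image[OF borel_compact[OF cQ'']] by simp
  also have "\<dots> = measure lebesgue (Q' ` (Li ` S))"
    using cQ'' by (rule measure_leb_compact[symmetric])
  also have "\<dots> = measure lebesgue (Li ` S)"
    by (rule measure_orthogonal_image[OF oQ' lmeasurable_compact[OF cLi]])
  also have "\<dots> = measure lborel (Li ` S)"
    using cLi by (rule measure_leb_compact)
  also have "\<dots> = measure lborel S"
    unfolding measure_def using emeasure_Li_image[OF borel_compact[OF S]] by simp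
  also have "\<dots> = measure lebesgue S"
    using S by (rule measure_leb_compact[symmetric])
  finally show ?thesis .
qed

lemma exists_orth:
  fixes u v :: "'a::euclidean_space"
  assumes "norm u = 1" "norm v = 1"
  shows "\<exists>Q. orthogonal_transformation Q \<and> Q u = v"
proof -
  have "norm (Li u) = norm (Li v)"
    using assms Li_inner by (metis norm_eq_sqrt_inner)
  then obtain g where g: "orthogonal_transformation g" "g (Li u) = Li v"
    using orthogonal_transformation_exists by metis
  have "orthogonal_transformation (Lm \<circ> g \<circ> Li)"
    using g(1) by (auto simp: orthogonal_transformation_def Li_inner Lm_inner
          intro!: linear_compose linear_Li linear_Lm)
  moreover have "(Lm \<circ> g \<circ> Li) u = v" using g(2) by simp
  ultimately show ?thesis by blast
qed



lemma oned_point: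
  fixes f :: "real \<Rightarrow> real"
  assumes p: "0 < p" and pc: "p_concave p f" and b: "0 < b"
    and pos: "\<forall>t\<in>{-b<..<b}. f t > 0"
    and x: "-b < x" "x < b"
  shows "(1/2) powr (1/p) * f x \<le> f ((x - b) / 2)"
proof (rule ccontr)
  define z where "z = (x - b) / 2"
  have z: "-b < z" "z < x" using x by (auto simp: z_def)
  have fx: "f x > 0" using pos x by auto
  have fz: "f z > 0" using pos x z b by (auto simp: z_def)
  assume "\<not> (1/2) powr (1/p) * f x \<le> f ((x - b) / 2)"
  then have lt: "f z / f x < (1/2) powr (1/p)"
    using fx by (simp add: z_def divide_less_eq mult.commute)
  define r where "r = (f z / f x) powr p"
  have r0: "0 < r" using fz fx by (simp add: r_def)
  have "r < ((1/2) powr (1/p)) powr p"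
    unfolding r_def using lt fz fx p by (intro powr_less_mono2) auto
  also have "\<dots> = 1/2" using p by (simp add: powr_powr)
  finally have r2: "r < 1/2" .
  define w where "w = (z - r * x) / (1 - r)"
  have w1: "-b < w"
  proof -
    have "-b * (1 - r) < z - r * x"
    proof -
      have "r * (x + b) < (1/2) * (x + b)" using r2 x by (intro mult_strict_right_mono) auto
      then show ?thesis by (simp add: z_def algebra_simps)
    qed
    then show ?thesis using r2 by (simp add: w_def less_divide_eq)
  qed
  have w2: "w \<le> z"
  proof -
    have "r * z \<le> r * x" using r0 z by (intro mult_left_mono) auto
    then have "z - r * x \<le> z * (1 - r)" by (simp add: algebra_simps)
    then show ?thesis using r2 by (simp add: w_def divide_le_eq)
  qed
  define y where "y = (-b + w) / 2"
  have y: "-b < y" "y < z" "y < w" using w1 w2 by (auto simp: y_def)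
  have fy: "f y > 0" using pos y z x by auto
  define l where "l = (x - z) / (x - y)"
  have l: "0 < l" "l < 1" using y z by (auto simp: l_def field_simps)
  have lxy: "l * (x - y) = x - z" using y z by (simp add: l_def)
  have comb: "(1 - l) * x + l * y = z"
  proof -
    have "(1 - l) * x + l * y = x - l * (x - y)" by (simp add: algebra_simps)
    then show ?thesis using lxy by simp
  qed
  have oml: "1 - l = (z - y) / (x - y)" using y z by (simp add: l_def field_simps)
  have rl: "r < 1 - l"
  proof -
    have "y * (1 - r) < z - r * x" using y(3) r2 by (simp add: w_def less_divide_eq)
    then have "r * (x - y) < z - y" by (simp add: algebra_simps)
    then show ?thesis unfolding oml using y z by (simp add: less_divide_eq)
  qed
  have "f z \<ge> ((1 - l) * f x powr p + l * f y powr p) powr (1 / p)"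
    using pc fx fy l unfolding p_concave_def comb[symmetric] by auto
  moreover have "((1 - l) * f x powr p) powr (1 / p) \<le> ((1 - l) * f x powr p + l * f y powr p) powr (1 / p)"
    using l p fx fy by (intro powr_mono2) auto
  moreover have "((1 - l) * f x powr p) powr (1 / p) = (1 - l) powr (1/p) * f x"
    using l p fx by (simp add: powr_mult powr_powr)
  moreover have "r powr (1/p) < (1 - l) powr (1/p)"
    using rl r0 p by (intro powr_less_mono2) auto
  moreover have "r powr (1/p) = f z / f x"
    using p fz fx by (simp add: r_def powr_powr)
  ultimately have "f z / f x * f x < f z"
    using fx by (smt (verit) mult_strict_right_mono)
  then show False using fx by simp
qed



theorem proposition2p1:
  fixes K :: "(real \<times> 'b::euclidean_space) set"
    and u :: "real \<times> 'b" and p a b :: real and f :: "real \<Rightarrow> real"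
  assumes "0 < p"
    and "norm u = 1"
    and "compact K" and "interior K \<noteq> {}"
    and "f = section_vol K u"
    and "p_concave p f"
    and "a < b"
    and "\<forall>t. f t \<noteq> 0 \<longrightarrow> t \<in> {a..b}"
    and "\<forall>t\<in>{a<..<b}. f t > 0"
    and "a = - b"
  shows "measure lebesgue (K \<inter> {x. x \<bullet> u \<le> 0}) / measure lebesgue K
           \<ge> (1 / 2) powr ((p + 1) / p)"
proof -
  note p = assms(1) and cK = assms(3) and pc = assms(6)
  have b: "0 < b" using assms(7,10) by simp
  have supp: "\<And>t. f t \<noteq> 0 \<Longrightarrow> -b \<le> t \<and> t \<le> b" using assms(8,10) by auto
  have pos: "\<forall>t\<in>{-b<..<b}. f t > 0" using assms(9,10) by simp
  define Q where "Q = (SOME Q :: real \<times> 'b \<Rightarrow> real \<times> 'b. orthogonal_transformation Q \<and> Q (1, 0) = u)"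
  have "\<exists>Q :: real \<times> 'b \<Rightarrow> real \<times> 'b. orthogonal_transformation Q \<and> Q (1, 0) = u"
    by (rule exists_orth) (simp_all add: assms(2))
  then have hQ: "orthogonal_transformation Q" "Q (1, 0) = u"
    unfolding Q_def by (metis (mono_tags, lifting) someI_ex)+
  have linQ: "linear Q" using hQ(1) orthogonal_transformation_linear by blast
  have hp: "hyp_param u y = Q (0, y)" for y
    by (simp add: hyp_param_def Q_def Let_def)
  have Qty: "Q (t, y) = t *\<^sub>R u + hyp_param u y" for t y
  proof -
    have "(t, y) = t *\<^sub>R (1, 0) + (0, y)" by simp
    then have "Q (t, y) = t *\<^sub>R Q (1, 0) + Q (0, y)"
      by (metis linQ linear_add linear_scale)
    then show ?thesis by (simp add: hQ(2) hp)
  qed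
  have Qu: "Q z \<bullet> u = fst z" for z
  proof -
    have "Q z \<bullet> Q (1, 0) = z \<bullet> (1, 0)" using hQ(1) unfolding orthogonal_transformation_def by blast
    then show ?thesis using hQ(2) by (cases z) simp
  qed
  have fdef: "f t = measure lebesgue {y. Q (t, y) \<in> K}" for t
    by (simp add: assms(5) section_vol_def Qty)
  have f0: "f t \<ge> 0" for t by (simp add: fdef)
  have contQ: "continuous_on A Q" for A
    using linQ by (intro linear_continuous_on linear_conv_bounded_linear[THEN iffD1])
  have oiQ: "orthogonal_transformation (inv Q)" by (rule orthogonal_transformation_inv[OF hQ(1)])
  have contiQ: "continuous_on A (inv Q)" for A
    using oiQ by (intro linear_continuous_on linear_conv_bounded_linear[THEN iffD1]
        orthogonal_transformation_linear)
  have bijQ: "bij Q" using hQ(1) orthogonal_transformation_bij by blast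
  define K' where "K' = inv Q ` K"
  have memK': "z \<in> K' \<longleftrightarrow> Q z \<in> K" for z
  proof
    assume "z \<in> K'"
    then obtain k where "k \<in> K" "z = inv Q k" unfolding K'_def by blast
    then show "Q z \<in> K" using bijQ by (simp add: bij_is_surj surj_f_inv_f)
  next
    assume "Q z \<in> K"
    moreover have "inv Q (Q z) = z" using bijQ by (simp add: bij_is_inj inv_f_f)
    ultimately show "z \<in> K'" unfolding K'_def by (metis image_eqI)
  qed
  have cK': "compact K'" unfolding K'_def using cK contiQ compact_continuous_image by blast
  have Qinv: "Q (inv Q x) = x" for x using bijQ by (simp add: bij_is_surj surj_f_inv_f)
  have QK': "Q ` K' = K"
  proof
    show "Q ` K' \<subseteq> K" using memK' by auto
    show "K \<subseteq> Q ` K'"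
    proof
      fix x assume "x \<in> K"
      then have "inv Q x \<in> K'" using memK' Qinv by simp
      then show "x \<in> Q ` K'" using Qinv[of x] by (metis image_eqI)
    qed
  qed
  define Km' where "Km' = K' \<inter> {z. fst z \<le> 0}"
  have cKm': "compact Km'" unfolding Km'_def
    by (intro compact_Int_closed cK' closed_Collect_le continuous_intros)
  have QKm': "Q ` Km' = K \<inter> {x. x \<bullet> u \<le> 0}"
  proof
    show "Q ` Km' \<subseteq> K \<inter> {x. x \<bullet> u \<le> 0}" using memK' Qu unfolding Km'_def by auto
  next
    show "K \<inter> {x. x \<bullet> u \<le> 0} \<subseteq> Q ` Km'"
    proof
      fix x assume x: "x \<in> K \<inter> {x. x \<bullet> u \<le> 0}"
      have "inv Q x \<in> Km'" using x memK' Qu[of "inv Q x"] Qinv[of x] unfolding Km'_def by auto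
      then show "x \<in> Q ` Km'" using Qinv[of x] by (metis image_eqI)
    qed
  qed
  have mK: "measure lebesgue K = measure lborel K'"
    using measure_orth_compact[OF hQ(1) cK'] QK' measure_leb_compact[OF cK'] by simp
  have mKm: "measure lebesgue (K \<inter> {x. x \<bullet> u \<le> 0}) = measure lborel Km'"
    using measure_orth_compact[OF hQ(1) cKm'] QKm' measure_leb_compact[OF cKm'] by simp
  have setsK': "K' \<in> sets (lborel \<Otimes>\<^sub>M lborel)" "Km' \<in> sets (lborel \<Otimes>\<^sub>M lborel)"
    unfolding lborel_prod using borel_compact[OF cK'] borel_compact[OF cKm'] by simp_all
  have fiber: "emeasure lborel (Pair t -` K') = ennreal (f t)" for t
  proof -
    have eq: "Pair t -` K' = snd ` (K' \<inter> {z. fst z = t})" by force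
    have c: "compact (Pair t -` K')" unfolding eq
      by (intro compact_continuous_image compact_Int_closed cK' closed_Collect_eq continuous_intros)
    have "f t = measure lebesgue (Pair t -` K')" by (simp add: fdef memK' vimage_def)
    also have "\<dots> = measure lborel (Pair t -` K')" by (rule measure_leb_compact[OF c])
    finally show ?thesis
      using emeasure_compact_finite[OF c] by (simp add: emeasure_eq_ennreal_measure less_top)
  qed
  have fiberm: "emeasure lborel (Pair t -` Km') = ennreal (f t) * indicator {..0} t" for t
  proof (cases "t \<le> 0")
    case True
    then have "Pair t -` Km' = Pair t -` K'" by (auto simp: Km'_def)
    then show ?thesis using True fiber by simp
  next
    case False
    then have "Pair t -` Km' = {}" by (auto simp: Km'_def)
    then show ?thesis using False by simp
  qed
  have fmeas[measurable]: "(\<lambda>t. ennreal (f t)) \<in> borel_measurable borel"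
  proof -
    have "(\<lambda>t. emeasure lborel (Pair t -` K')) \<in> borel_measurable lborel"
      by (rule lborel.measurable_emeasure_Pair[OF setsK'(1)])
    then show ?thesis using fiber by simp
  qed
  define E where "E = (\<integral>\<^sup>+t. ennreal (f t) \<partial>lborel)"
  define Em where "Em = (\<integral>\<^sup>+t. ennreal (f t) * indicator {..0} t \<partial>lborel)"
  have EK': "emeasure lborel K' = E"
    using lborel.emeasure_pair_measure_alt[OF setsK'(1)] fiber by (simp add: lborel_prod E_def)
  have EKm': "emeasure lborel Km' = Em"
    using lborel.emeasure_pair_measure_alt[OF setsK'(2)] fiberm by (simp add: lborel_prod Em_def)
  define c where "c = (1/2) powr (1/p)"
  have c0: "c \<ge> 0" by (simp add: c_def)
  have key: "ennreal (1/2) * (ennreal c * E) \<le> Em"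
  proof -
    define g where "g t = ennreal (f t) * indicator {..0::real} t" for t
    have gm: "g \<in> borel_measurable borel" unfolding g_def by measurable
    have "Em = ennreal \<bar>1/2\<bar> * (\<integral>\<^sup>+x. g (-b/2 + (1/2) * x) \<partial>lborel)"
      unfolding Em_def g_def[symmetric] by (rule nn_integral_real_affine[OF gm]) simp
    moreover have "(\<integral>\<^sup>+x. ennreal (c * f x) \<partial>lborel) \<le> (\<integral>\<^sup>+x. g (-b/2 + (1/2) * x) \<partial>lborel)"
    proof (rule nn_integral_mono_AE)
      have "AE x in lborel. x \<noteq> b" "AE x in lborel. x \<noteq> -b" by (rule AE_lborel_singleton)+
      then show "AE x in lborel. ennreal (c * f x) \<le> g (-b/2 + (1/2) * x)"
      proof eventually_elim
        case (elim x)
        show ?case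
        proof (cases "-b < x \<and> x < b")
          case True
          have "c * f x \<le> f ((x - b) / 2)"
            using oned_point[OF p pc b pos] True by (simp add: c_def)
          moreover have "-b/2 + (1/2) * x = (x - b) / 2" by simp
          moreover have "(x - b) / 2 \<le> 0" using True by simp
          ultimately have "g (-b/2 + (1/2) * x) = ennreal (f ((x - b) / 2))"
            unfolding g_def by (metis indicator_simps(1) atMost_iff mult.right_neutral ennreal_1)
          then show ?thesis using \<open>c * f x \<le> f ((x - b) / 2)\<close> by (simp add: ennreal_leI)
        next
          case False
          then have "f x = 0" using supp elim by force
          then show ?thesis by simp
        qed
      qed
    qed
    moreover have "(\<integral>\<^sup>+x. ennreal (c * f x) \<partial>lborel) = ennreal c * E"
    proof -
      have fm2: "(\<lambda>t. ennreal (f t)) \<in> borel_measurable lborel" using fmeas by simp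
      have "(\<integral>\<^sup>+x. ennreal (c * f x) \<partial>lborel) = (\<integral>\<^sup>+x. ennreal c * ennreal (f x) \<partial>lborel)"
        using c0 f0 by (simp add: ennreal_mult)
      also have "\<dots> = ennreal c * E" unfolding E_def by (rule nn_integral_cmult[OF fm2])
      finally show ?thesis .
    qed
    ultimately show ?thesis by (metis abs_of_nonneg mult_left_mono zero_le divide_nonneg_nonneg zero_le_one zero_le_numeral)
  qed
  have Efin: "E = ennreal (measure lborel K')"
    unfolding EK'[symmetric] using emeasure_compact_finite[OF cK'] by (intro emeasure_eq_ennreal_measure) (simp add: less_top)
  have Emfin: "Em = ennreal (measure lborel Km')"
    unfolding EKm'[symmetric] using emeasure_compact_finite[OF cKm'] by (intro emeasure_eq_ennreal_measure) (simp add: less_top)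
  have m0: "measure lborel K' \<ge> 0" by simp
  have "ennreal (1/2 * c * measure lborel K') = ennreal (1/2 * (c * measure lborel K'))"
    by (metis mult.assoc)
  also have "\<dots> = ennreal (1/2) * ennreal (c * measure lborel K')"
    by (rule ennreal_mult) (use c0 m0 in auto)
  also have "ennreal (c * measure lborel K') = ennreal c * ennreal (measure lborel K')"
    by (rule ennreal_mult) (use c0 m0 in auto)
  also have "ennreal (measure lborel K') = E" using Efin by simp
  also have "ennreal (1/2) * (ennreal c * E) \<le> Em" by (rule key)
  also have "Em = ennreal (measure lborel Km')" by (rule Emfin)
  finally have "ennreal (1/2 * c * measure lborel K') \<le> ennreal (measure lborel Km')" .
  then have ineq: "1/2 * c * measure lebesgue K \<le> measure lebesgue (K \<inter> {x. x \<bullet> u \<le> 0})"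
    unfolding mK mKm using measure_nonneg[of lborel Km'] by (simp add: ennreal_le_iff2) linarith
  have Kpos: "measure lebesgue K > 0"
  proof -
    obtain x0 where "x0 \<in> interior K" using assms(4) by blast
    then obtain e where e: "e > 0" "ball x0 e \<subseteq> K" using mem_interior by blast
    have "0 < measure lborel (ball x0 e)" using content_ball_pos[OF e(1)] by simp
    also have "\<dots> \<le> measure lborel K"
      using e(2) fmeasurable_compact[OF cK] by (intro measure_mono_fmeasurable) auto
    finally show ?thesis using measure_leb_compact[OF cK] by simp
  qed
  have pw: "(1 / 2) powr ((p + 1) / p) = 1/2 * c"
  proof -
    have "(p + 1) / p = 1 + 1/p" using p by (simp add: field_simps)
    then show ?thesis by (simp add: c_def powr_add)
  qed
  have "(1 / 2) powr ((p + 1) / p) * measure lebesgue K \<le> measure lebesgue (K \<inter> {x. x \<bullet> u \<le> 0})"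
    unfolding pw using ineq .
  then show ?thesis using Kpos by (simp add: le_divide_eq)
qed


end
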